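(* Let $k\geq 1$ be an integer and let $G$ be a graph of order $n$. If \[ \mu(G)>\frac{k-1}{2}+\sqrt{kn+\frac{(k+1)^2}{4}}, \] then $G$ contains $C_{2k+1}$ or $C_{2k+2}$ as a subgraph.
   Context: All graphs are finite and simple. $\mu(G)$ denotes the largest eigenvalue of the adjacency matrix of $G$. $C_r$ denotes the cycle on $r$ vertices. *)

theory Defs
  imports "HOL-Analysis.Analysis"
begin

text \<open>A finite simple graph whose vertex set is the finite type 'a
  (so its order is CARD('a)), given by a symmetric irreflexive adjacency relation.\<close>
definition simple_graph :: "('a::finite \<Rightarrow> 'a \<Rightarrow> bool) \<Rightarrow> bool" where
  "simple_graph E \<longleftrightarrow> (\<forall>u v. E u v \<longrightarrow> E v u) \<and> (\<forall>v. \<not> E v v)"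

definition adj_matrix :: "('a::finite \<Rightarrow> 'a \<Rightarrow> bool) \<Rightarrow> real^'a^'a" where
  "adj_matrix E = (\<chi> i j. if E i j then 1 else 0)"

text \<open>Eigenvalues of a real square matrix (all eigenvalues of a real symmetric
  matrix, such as an adjacency matrix, are real).\<close>
definition is_eigenvalue :: "real^'n^'n \<Rightarrow> real \<Rightarrow> bool" where
  "is_eigenvalue A l \<longleftrightarrow> (\<exists>x. x \<noteq> 0 \<and> A *v x = l *\<^sub>R x)"

definition spectral_radius_graph :: "('a::finite \<Rightarrow> 'a \<Rightarrow> bool) \<Rightarrow> real" where
  "spectral_radius_graph E = Max {l. is_eigenvalue (adj_matrix E) l}"

definition contains_cycle :: "('a \<Rightarrow> 'a \<Rightarrow> bool) \<Rightarrow> nat \<Rightarrow> bool" where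
  "contains_cycle E r \<longleftrightarrow> (\<exists>vs. length vs = r \<and> distinct vs \<and>
      (\<forall>i<r. E (vs ! i) (vs ! ((i + 1) mod r))))"

end

theory Submission
  imports Defs
begin


fun wpath :: "('a \<Rightarrow> 'a \<Rightarrow> bool) \<Rightarrow> 'a list \<Rightarrow> bool" where
  "wpath h [] = True"
| "wpath h [x] = True"
| "wpath h (x # y # zs) = (h x y \<and> wpath h (y # zs))"

lemma wpath_Cons: "wpath h (x # xs) \<longleftrightarrow> wpath h xs \<and> (xs \<noteq> [] \<longrightarrow> h x (hd xs))"
  by (cases xs) auto

lemma wpath_append:
  "wpath h (xs @ ys) \<longleftrightarrow> wpath h xs \<and> wpath h ys \<and> (xs \<noteq> [] \<longrightarrow> ys \<noteq> [] \<longrightarrow> h (last xs) (hd ys))"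
  by (induction xs) (auto simp: wpath_Cons)

lemma wpath_rev:
  assumes "\<And>x y. h x y \<Longrightarrow> h y x"
  shows "wpath h (rev xs) = wpath h xs"
  by (induction xs) (auto simp: wpath_append wpath_Cons hd_rev last_rev assms)

lemma wpath_nth: "wpath h xs \<Longrightarrow> Suc i < length xs \<Longrightarrow> h (xs ! i) (xs ! Suc i)"
proof (induction xs arbitrary: i)
  case (Cons x xs)
  then show ?case by (cases i) (auto simp: wpath_Cons hd_conv_nth)
qed simp

lemma wpath_mono: "wpath h xs \<Longrightarrow> (\<And>x y. h x y \<Longrightarrow> g x y) \<Longrightarrow> wpath g xs"
  by (induction xs) (auto simp: wpath_Cons)

lemma wpath_take: "wpath h xs \<Longrightarrow> wpath h (take n xs)"
  by (metis append_take_drop_id wpath_append)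

lemma wpath_butlast: "wpath h xs \<Longrightarrow> wpath h (butlast xs)"
  by (metis butlast_conv_take wpath_take)

lemma count_nonA:
  assumes "wpath h ps" and "\<And>x y. h x y \<Longrightarrow> x \<in> A \<or> y \<in> A"
  shows "2 * length (filter (\<lambda>x. x \<notin> A) ps) + (if ps \<noteq> [] \<and> last ps \<in> A then 1 else 0)
         \<le> length ps + (if ps \<noteq> [] \<and> hd ps \<notin> A then 1 else 0)"
  using assms(1)
proof (induction ps)
  case (Cons x xs)
  show ?case
  proof (cases xs)
    case (Cons y zs)
    with Cons.prems Cons.IH have "h x y" and IH: "2 * length (filter (\<lambda>x. x \<notin> A) (y#zs)) + (if last (y#zs) \<in> A then 1 else 0)
         \<le> length (y#zs) + (if y \<notin> A then 1 else 0)" by (auto simp: wpath_Cons)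
    then have "x \<in> A \<or> y \<in> A" using assms(2) by auto
    then show ?thesis using IH Cons by (auto split: if_splits)
  qed simp
qed simp

definition gcyc :: "('a \<Rightarrow> 'a \<Rightarrow> bool) \<Rightarrow> 'a list \<Rightarrow> bool" where
  "gcyc h Z \<longleftrightarrow> Z \<noteq> [] \<and> wpath h Z \<and> h (last Z) (hd Z)"

lemma cyc_rotate1: "gcyc h Z \<Longrightarrow> gcyc h (rotate1 Z)"
proof (cases Z)
  case (Cons x xs)
  assume c: "gcyc h Z"
  show ?thesis
  proof (cases "xs = []")
    case True then show ?thesis using c Cons by simp
  next
    case False
    then show ?thesis using c Cons by (auto simp: gcyc_def wpath_append wpath_Cons)
  qed
qed (simp add: gcyc_def)

lemma cyc_rotate: "gcyc h Z \<Longrightarrow> gcyc h (rotate n Z)"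
  by (induction n) (auto simp: cyc_rotate1)

lemma cyc_decomp:
  assumes c: "gcyc h Z" and d: "distinct Z" and len: "3 \<le> length Z" and j: "j < length Z"
  shows "\<exists>M p. rotate j Z = Z!j # M @ [p] \<and> M \<noteq> [] \<and> hd M = Z ! (Suc j mod length Z)
     \<and> h (Z!j) (hd M) \<and> wpath h M \<and> h (last M) p \<and> h p (Z!j)
     \<and> distinct (Z!j # M @ [p]) \<and> set (Z!j # M @ [p]) = set Z"
proof -
  define R where "R = rotate j Z"
  have cR: "gcyc h R" using c by (simp add: R_def cyc_rotate)
  have lR: "length R = length Z" by (simp add: R_def)
  have hdR: "hd R = Z!j" using j unfolding R_def by (subst hd_rotate_conv_nth) auto
  have R1: "R ! 1 = Z ! (Suc j mod length Z)" using len by (simp add: R_def nth_rotate)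
  obtain M p where RM: "R = hd R # M @ [p]"
  proof -
    have "R \<noteq> []" using lR len by auto
    then have "R = hd R # tl R" by simp
    moreover have "tl R \<noteq> []" using lR len by (cases R) auto
    then have "tl R = butlast (tl R) @ [last (tl R)]" by simp
    ultimately show ?thesis using that by metis
  qed
  have "length M = length Z - 2" using arg_cong[OF RM, of length] lR by simp
  then have Mne: "M \<noteq> []" using len by auto
  have "R ! 1 = hd M" using Mne by (subst RM) (simp add: hd_conv_nth nth_append)
  moreover have "wpath h (hd R # M @ [p])" "h (last (hd R # M @ [p])) (hd (hd R # M @ [p]))"
    using cR RM by (metis gcyc_def)+
  moreover have "distinct (hd R # M @ [p])" "set (hd R # M @ [p]) = set Z"
    using d RM by (metis R_def distinct_rotate set_rotate)+
  ultimately show ?thesis using Mne RM R1 hdR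
    by (auto simp: R_def wpath_Cons wpath_append)
qed

definition gdeg :: "('a \<Rightarrow> 'a \<Rightarrow> bool) \<Rightarrow> 'a set \<Rightarrow> 'a \<Rightarrow> nat" where
  "gdeg h V x = card {y\<in>V. h x y}"

definition apath :: "('a \<Rightarrow> 'a \<Rightarrow> bool) \<Rightarrow> 'a set \<Rightarrow> 'a set \<Rightarrow> 'a list \<Rightarrow> bool" where
  "apath h V A ps \<longleftrightarrow> ps \<noteq> [] \<and> distinct ps \<and> set ps \<subseteq> V \<and> wpath h ps \<and> hd ps \<in> A \<and> last ps \<in> A"

lemma apath_rev: "(\<And>x y. h x y \<Longrightarrow> h y x) \<Longrightarrow> apath h V A ps \<Longrightarrow> apath h V A (rev ps)"
  by (auto simp: apath_def wpath_rev hd_rev last_rev)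

context
  fixes h :: "'a \<Rightarrow> 'a \<Rightarrow> bool" and V A :: "'a set" and k L :: nat
  assumes fin: "finite V"
  and sym: "\<And>x y. h x y \<Longrightarrow> h y x"
  and irr: "\<And>x. \<not> h x x"
  and AB: "\<And>x y. h x y \<Longrightarrow> x \<in> A \<or> y \<in> A"
  and degA: "\<And>x. x \<in> V \<Longrightarrow> x \<in> A \<Longrightarrow> k \<le> gdeg h V x"
  and degB: "\<And>x. x \<in> V \<Longrightarrow> x \<notin> A \<Longrightarrow> k + 1 \<le> gdeg h V x"
  and maxL: "\<And>ps. apath h V A ps \<Longrightarrow> length ps \<le> L"
  and Lk: "L < 2 * k"
begin

lemma nonA_card:
  assumes "apath h V A ps" "length ps = L"
  shows "card (set ps - A) \<le> k - 1"
proof -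
  have "2 * length (filter (\<lambda>x. x \<notin> A) ps) + 1 \<le> length ps"
    using count_nonA[of h ps A] assms AB unfolding apath_def by auto
  moreover have "length (filter (\<lambda>x. x \<notin> A) ps) = card (set ps - A)"
  proof -
    have "distinct (filter (\<lambda>x. x \<notin> A) ps)" using assms(1) by (simp add: apath_def)
    then have "card (set (filter (\<lambda>x. x \<notin> A) ps)) = length (filter (\<lambda>x. x \<notin> A) ps)"
      by (rule distinct_card)
    moreover have "set (filter (\<lambda>x. x \<notin> A) ps) = set ps - A" by auto
    ultimately show ?thesis by simp
  qed
  ultimately show ?thesis using assms(2) Lk by linarith
qed

lemma F1:
  assumes P: "apath h V A ps" and len: "length ps = L" and y: "y \<in> V" "h (hd ps) y"
  shows "y \<in> set ps"
proof (rule ccontr)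
  assume yn: "y \<notin> set ps"
  have pne: "ps \<noteq> []" and pd: "distinct ps" and pV: "set ps \<subseteq> V" and pw: "wpath h ps"
    and phd: "hd ps \<in> A" and pl: "last ps \<in> A" using P by (auto simp: apath_def)
  show False
  proof (cases "y \<in> A")
    case True
    have "apath h V A (y # ps)"
      using P yn y True sym by (auto simp: apath_def wpath_Cons)
    then show False using maxL len by fastforce
  next
    case False
    define I where "I = {i. Suc i < length ps \<and> ps ! i \<notin> A}"
    have sub: "{z\<in>V. h y z} \<subseteq> insert (hd ps) ((\<lambda>i. ps ! Suc i) ` I)"
    proof
      fix z assume z: "z \<in> {z\<in>V. h y z}"
      then have zV: "z \<in> V" and hyz: "h y z" by auto
      have zy: "z \<noteq> y" using hyz irr by auto
      show "z \<in> insert (hd ps) ((\<lambda>i. ps ! Suc i) ` I)"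
      proof (cases "z \<in> set ps")
        case False
        have "z \<in> A" using AB[OF hyz] \<open>y \<notin> A\<close> by auto
        then have "apath h V A (z # y # ps)"
          using P yn y False zy zV hyz sym by (auto simp: apath_def wpath_Cons)
        then show ?thesis using maxL len by fastforce
      next
        case True
        then obtain j where j: "j < length ps" "ps ! j = z" by (auto simp: in_set_conv_nth)
        show ?thesis
        proof (cases j)
          case 0
          then show ?thesis using j pne by (simp add: hd_conv_nth)
        next
          case (Suc i)
          show ?thesis
          proof (cases "ps ! i \<in> A")
            case False
            then show ?thesis using Suc j unfolding I_def by auto
          next
            case True
            define qs where "qs = rev (take j ps) @ y # drop j ps"
            have tne: "take j ps \<noteq> []" using Suc pne by simp
            have dne: "drop j ps \<noteq> []" using j by simp
            have "hd (drop j ps) = z" using j by (simp add: hd_drop_conv_nth)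
            moreover have "last (take j ps) = ps ! i" using Suc j by (simp add: take_Suc_conv_app_nth)
            moreover have "hd (take j ps) = hd ps" using tne pne by (cases ps) auto
            moreover have "last (drop j ps) = last ps" using j by simp
            moreover have "wpath h (take j ps)" "wpath h (drop j ps)"
              using pw by (metis append_take_drop_id wpath_append)+
            moreover have "distinct (rev (take j ps) @ y # drop j ps)"
              using pd yn by (auto simp: set_take_disj_set_drop_if_distinct dest: in_set_takeD in_set_dropD)
            moreover have "set qs \<subseteq> V" using pV y unfolding qs_def
              by (auto dest: in_set_takeD in_set_dropD)
            ultimately have "apath h V A qs"
              using tne dne True pl hyz y sym unfolding qs_def apath_def
              by (auto simp: wpath_append wpath_Cons wpath_rev hd_rev last_rev sym)
            moreover have "length qs = L + 1" using j len unfolding qs_def by simp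
            ultimately show ?thesis using maxL by fastforce
          qed
        qed
      qed
    qed
    have "card {z\<in>V. h y z} \<le> card (insert (hd ps) ((\<lambda>i. ps ! Suc i) ` I))"
    proof (rule card_mono[OF _ sub])
      have "finite I" unfolding I_def by (rule finite_subset[of _ "{..<length ps}"]) auto
      then show "finite (insert (hd ps) ((\<lambda>i. ps ! Suc i) ` I))" by simp
    qed
    also have "\<dots> \<le> Suc (card ((\<lambda>i. ps ! Suc i) ` I))" by (rule card_insert_le_m1) (auto simp: card_insert_if)
    also have "card ((\<lambda>i. ps ! Suc i) ` I) \<le> card I"
      by (rule card_image_le) (rule finite_subset[of _ "{..<length ps}"], auto simp: I_def)
    also have "card I \<le> card (set ps - A)"
    proof (rule card_inj_on_le)
      show "inj_on (nth ps) I" using pd by (auto simp: I_def inj_on_def nth_eq_iff_index_eq)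
      show "nth ps ` I \<subseteq> set ps - A" by (auto simp: I_def)
    qed simp
    also have "\<dots> \<le> k - 1" by (rule nonA_card[OF P len])
    finally have "gdeg h V y \<le> k" unfolding gdeg_def using Lk by linarith
    then show False using degB[OF y(1) False] by simp
  qed
qed

lemma F1_last:
  assumes P: "apath h V A ps" and len: "length ps = L" and y: "y \<in> V" "h (last ps) y"
  shows "y \<in> set ps"
  using F1[OF apath_rev[OF sym P]] assms by (auto simp: hd_rev)

lemma B1:
  assumes Q: "apath h V A Q" "length Q = L"
    and R: "Zr = c # M @ [p]" "M \<noteq> []" "h c (hd M)" "wpath h M" "h (last M) p" "h p c"
       "distinct Zr" "set Zr = set Q"
    and c: "c \<in> A" and x: "x \<in> V" "x \<notin> set Q" "h c x"
  shows "hd M \<notin> A \<and> p \<notin> A"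
proof
  have lZ: "length Zr = L"
  proof -
    have "length Zr = card (set Zr)" using R(7) by (simp add: distinct_card)
    also have "\<dots> = card (set Q)" using R(8) by simp
    also have "\<dots> = L" using Q by (simp add: distinct_card apath_def)
    finally show ?thesis .
  qed
  show "hd M \<notin> A"
  proof
    assume a: "hd M \<in> A"
    have "apath h V A (M @ [p, c])"
      using R Q a c by (auto simp: apath_def wpath_append wpath_Cons)
    moreover have "length (M @ [p, c]) = L" using lZ R by simp
    ultimately have "x \<in> set (M @ [p, c])" using F1_last x by fastforce
    then show False using x R by auto
  qed
  show "p \<notin> A"
  proof
    assume a: "p \<in> A"
    have "apath h V A (p # rev M @ [c])"
      using R Q a c sym by (auto simp: apath_def wpath_append wpath_Cons wpath_rev hd_rev last_rev)
    moreover have "length (p # rev M @ [c]) = L" using lZ R by simp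
    ultimately have "x \<in> set (p # rev M @ [c])" using F1_last x by fastforce
    then show False using x R by auto
  qed
qed

lemma apath_closure:
  assumes Q: "apath h V A Q" "length Q = L" and c: "c \<in> set Q" and x: "x \<in> V" "h c x"
  shows "x \<in> set Q"
proof (rule ccontr)
  assume xn: "x \<notin> set Q"
  have qne: "Q \<noteq> []" and qd: "distinct Q" and qV: "set Q \<subseteq> V" and qw: "wpath h Q"
    and qhd: "hd Q \<in> A" and ql: "last Q \<in> A" using Q by (auto simp: apath_def)
  define v1 where "v1 = hd Q"
  define vl where "vl = last Q"
  have v1V: "v1 \<in> V" and vlV: "vl \<in> V" using qne qV by (auto simp: v1_def vl_def)
  have v10: "Q ! 0 = v1" using qne by (simp add: v1_def hd_conv_nth)
  have vlL: "Q ! (L - 1) = vl" using qne Q(2) by (simp add: vl_def last_conv_nth)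
  define I1 where "I1 = {i. Suc i < L \<and> h v1 (Q ! Suc i)}"
  define I2 where "I2 = {i. Suc i < L \<and> h vl (Q ! i)}"
  have finI: "finite I1" "finite I2" unfolding I1_def I2_def
    by (rule finite_subset[of _ "{..<L}"], auto)+
  have "{y\<in>V. h v1 y} \<subseteq> (\<lambda>i. Q ! Suc i) ` I1"
  proof
    fix y assume y: "y \<in> {y\<in>V. h v1 y}"
    then have "y \<in> set Q" using F1[OF Q] by (auto simp: v1_def)
    then obtain j where j: "j < L" "Q ! j = y" using Q(2) by (auto simp: in_set_conv_nth)
    have "j \<noteq> 0"
    proof
      assume "j = 0" then have "h v1 v1" using j y v10 by auto
      then show False using irr by auto
    qed
    then obtain i where "j = Suc i" by (cases j) auto
    then show "y \<in> (\<lambda>i. Q ! Suc i) ` I1" using j y unfolding I1_def by auto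
  qed
  then have "card {y\<in>V. h v1 y} \<le> card ((\<lambda>i. Q ! Suc i) ` I1)"
    using finI by (intro card_mono) auto
  also have "\<dots> \<le> card I1" using finI by (intro card_image_le) auto
  finally have c1: "k \<le> card I1" using degA[OF v1V] qhd by (simp add: gdeg_def v1_def)
  have "{y\<in>V. h vl y} \<subseteq> (\<lambda>i. Q ! i) ` I2"
  proof
    fix y assume y: "y \<in> {y\<in>V. h vl y}"
    then have "y \<in> set Q" using F1_last[OF Q] by (auto simp: vl_def)
    then obtain j where j: "j < L" "Q ! j = y" using Q(2) by (auto simp: in_set_conv_nth)
    have "j \<noteq> L - 1"
    proof
      assume "j = L - 1" then have "h vl vl" using j y vlL by auto
      then show False using irr by auto
    qed
    then show "y \<in> (\<lambda>i. Q ! i) ` I2" using j y unfolding I2_def by force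
  qed
  then have "card {y\<in>V. h vl y} \<le> card ((\<lambda>i. Q ! i) ` I2)"
    using finI by (intro card_mono) auto
  also have "\<dots> \<le> card I2" using finI by (intro card_image_le) auto
  finally have c2: "k \<le> card I2" using degA[OF vlV] ql by (simp add: gdeg_def vl_def)
  have sub12: "I1 \<union> I2 \<subseteq> {..<L-1}" unfolding I1_def I2_def by auto
  have "card I1 \<le> L - 1" using card_mono[of "{..<L-1}" I1] sub12 by auto
  then have L3: "3 \<le> L" "2 \<le> k" using c1 Lk by linarith+
  obtain i where i: "i \<in> I1" "i \<in> I2"
  proof (rule ccontr)
    assume "\<not> thesis"
    then have "I1 \<inter> I2 = {}" using that by blast
    then have "card (I1 \<union> I2) = card I1 + card I2" using finI by (simp add: card_Un_disjoint)
    moreover have "card (I1 \<union> I2) \<le> L - 1" using card_mono[of "{..<L-1}"] sub12 by fastforce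
    ultimately show False using c1 c2 Lk by linarith
  qed
  have iL: "Suc i < L" and h1: "h v1 (Q ! Suc i)" and h2: "h vl (Q ! i)"
    using i unfolding I1_def I2_def by auto
  define Z where "Z = take (Suc i) Q @ rev (drop (Suc i) Q)"
  have tne: "take (Suc i) Q \<noteq> []" and dne: "drop (Suc i) Q \<noteq> []" using qne iL Q(2) by auto
  have Zset: "set Z = set Q" unfolding Z_def by (metis append_take_drop_id set_append set_rev)
  have Zd: "distinct Z" unfolding Z_def using qd
    by (metis append_take_drop_id distinct_append distinct_rev set_rev)
  have Zlen: "length Z = L" using Q(2) iL unfolding Z_def by simp
  have "wpath h (take (Suc i) Q)" "wpath h (drop (Suc i) Q)"
    using qw by (metis append_take_drop_id wpath_append)+
  moreover have "last (take (Suc i) Q) = Q ! i" using iL Q(2) by (simp add: take_Suc_conv_app_nth)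
  moreover have "hd (take (Suc i) Q) = v1" using tne qne by (cases Q) (auto simp: v1_def)
  moreover have "last (drop (Suc i) Q) = vl" using dne by (simp add: vl_def)
  moreover have "hd (drop (Suc i) Q) = Q ! Suc i" using iL Q(2) by (simp add: hd_drop_conv_nth)
  ultimately have cZ: "gcyc h Z" using tne dne h1 h2 sym unfolding Z_def gcyc_def
    by (auto simp: wpath_append wpath_rev hd_rev last_rev)
  have key: "\<And>j. j < L \<Longrightarrow> Z ! j \<in> A \<Longrightarrow> x \<notin> A \<Longrightarrow> h (Z ! j) x \<Longrightarrow> Z ! (Suc j mod L) \<notin> A \<and>
      (\<exists>M p. Z!j # M @ [p] = rotate j Z \<and> M \<noteq> [] \<and> h (Z!j) (hd M) \<and> wpath h M \<and> h (last M) p \<and> h p (Z!j)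
     \<and> distinct (Z!j # M @ [p]) \<and> set (Z!j # M @ [p]) = set Z \<and> p \<notin> A)"
  proof -
    fix j assume j: "j < L" "Z ! j \<in> A" "x \<notin> A" "h (Z ! j) x"
    obtain M p where D: "rotate j Z = Z!j # M @ [p]" "M \<noteq> []" "hd M = Z ! (Suc j mod length Z)"
      "h (Z!j) (hd M)" "wpath h M" "h (last M) p" "h p (Z!j)"
      "distinct (Z!j # M @ [p])" "set (Z!j # M @ [p]) = set Z"
      using cyc_decomp[OF cZ Zd _ ] Zlen L3 j by metis
    have "hd M \<notin> A \<and> p \<notin> A"
      using B1[OF Q refl D(2) D(4) D(5) D(6) D(7) D(8)] D(9) Zset j x xn by auto
    then show "?thesis j" using D Zlen by metis
  qed
  obtain j where j: "j < L" "Z ! j = c" using c Zset Zlen by (metis in_set_conv_nth)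
  obtain M p where D: "rotate j Z = c # M @ [p]" "M \<noteq> []" "hd M = Z ! (Suc j mod length Z)"
      "h c (hd M)" "wpath h M" "h (last M) p" "h p c"
      "distinct (c # M @ [p])" "set (c # M @ [p]) = set Z"
    using cyc_decomp[OF cZ Zd _ ] Zlen L3 j by metis
  have pV: "p \<in> V" and cV: "c \<in> V" and MV: "set M \<subseteq> V" using D(9) Zset qV by auto
  have ZV: "set Z \<subseteq> V" using Zset qV by simp
  have wcM: "wpath h (c # M)" using D(2) D(4) D(5) by (simp add: wpath_Cons)
  have wcMp: "wpath h (c # M @ [p])" using D(2) D(4) D(5) D(6) by (simp add: wpath_Cons wpath_append)
  have dcM: "distinct (c # M)" using D(8) by simp
  have sV: "set (c # M @ [p]) \<subseteq> V" using D(9) ZV by simp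
  have xZ: "x \<notin> set (c # M @ [p])" using D(9) Zset xn by simp
  have lcMp: "length (c # M @ [p]) = L"
  proof -
    have "length (c # M @ [p]) = card (set (c # M @ [p]))" using D(8) by (simp only: distinct_card)
    also have "\<dots> = card (set Z)" using D(9) by simp
    also have "\<dots> = L" using Zd Zlen by (simp add: distinct_card)
    finally show ?thesis .
  qed
  show False
  proof (cases "x \<in> A")
    case True
    show False
    proof (cases "p \<in> A")
      case True
      have d1: "distinct (x # c # M @ [p])" using D(8) xZ by (simp only: distinct.simps(2)) simp
      have s1: "set (x # c # M @ [p]) \<subseteq> V" using x(1) sV by (simp only: set_simps insert_subset)
      have w1: "wpath h (x # c # M @ [p])" using wcMp sym[OF x(2)] by (simp only: wpath.simps(3) simp_thms)
      have l1: "last (x # c # M @ [p]) = p" by simp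
      have "apath h V A (x # c # M @ [p])"
        unfolding apath_def using d1 s1 w1 l1 True \<open>x \<in> A\<close> by simp
      moreover have "length (x # c # M @ [p]) = L + 1"
        using lcMp by simp
      ultimately show False using maxL by fastforce
    next
      case False
      have lM: "last M \<in> A" using AB[OF D(6)] False by auto
      have d1: "distinct (x # c # M)" using dcM xZ by simp
      have s1: "set (x # c # M) \<subseteq> V" using x(1) sV by auto
      have w1: "wpath h (x # c # M)" using wcM sym[OF x(2)] by (simp only: wpath.simps(3) simp_thms)
      have l1: "last (x # c # M) = last M" using D(2) by simp
      have ap: "apath h V A (x # c # M)"
        unfolding apath_def using d1 s1 w1 l1 lM \<open>x \<in> A\<close> by simp
      moreover have "length (x # c # M) = L"
        using lcMp by simp
      ultimately have "p \<in> set (x # c # M)" using F1_last[of "x # c # M" p] D(6) pV D(2) by auto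
      then show False using D(8) xZ by auto
    qed
  next
    case False
    have cA: "c \<in> A" using AB[OF x(2)] False by auto
    have pA: "p \<notin> A"
    proof -
      have "Z ! j \<in> A" "h (Z ! j) x" using j cA x by auto
      then obtain M' p' where "Z!j # M' @ [p'] = rotate j Z" "p' \<notin> A"
        using key[OF j(1) _ False] by blast
      then have "M' @ [p'] = M @ [p]" using D(1) by simp
      then show ?thesis using \<open>p' \<notin> A\<close> by simp
    qed
    have lM: "last M \<in> A" using AB[OF D(6)] pA by auto
    have NZ: "{z\<in>V. h x z} \<subseteq> (\<lambda>j. Z ! j) ` {j. j < L \<and> Z ! (Suc j mod L) \<notin> A}"
    proof
      fix z assume z: "z \<in> {z\<in>V. h x z}"
      then have zV: "z \<in> V" and hxz: "h x z" by auto
      have zA: "z \<in> A" using AB[OF hxz] False by auto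
      have "z \<in> set Q"
      proof (rule ccontr)
        assume zn: "z \<notin> set Q"
        have zx: "z \<noteq> x" using hxz irr by auto
        have zZ: "z \<notin> set (c # M @ [p])" using D(9) Zset zn by simp
        have d1: "distinct (z # x # c # M)" using zZ zx xZ dcM by auto
        have s1: "set (z # x # c # M) \<subseteq> V" using zV x(1) sV by auto
        have w1: "wpath h (z # x # c # M)" using wcM sym[OF hxz] sym[OF x(2)] by (simp only: wpath.simps(3) simp_thms)
        have l1: "last (z # x # c # M) = last M" using D(2) by simp
        have "apath h V A (z # x # c # M)"
          unfolding apath_def using d1 s1 w1 l1 lM zA by simp
        moreover have "length (z # x # c # M) = L + 1"
          using lcMp by simp
        ultimately show False using maxL by fastforce
      qed
      then obtain jz where jz: "jz < L" "Z ! jz = z" using Zset Zlen by (metis in_set_conv_nth)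
      moreover have "h (Z ! jz) x" using jz sym[OF hxz] by simp
      ultimately have "Z ! (Suc jz mod L) \<notin> A" using key[OF jz(1) _ False] zA by auto
      then show "z \<in> (\<lambda>j. Z ! j) ` {j. j < L \<and> Z ! (Suc j mod L) \<notin> A}" using jz by auto
    qed
    define J where "J = {j. j < L \<and> Z ! (Suc j mod L) \<notin> A}"
    have finJ: "finite J" unfolding J_def by (rule finite_subset[of _ "{..<L}"]) auto
    have "gdeg h V x \<le> card ((\<lambda>j. Z ! j) ` J)" unfolding gdeg_def J_def
      using NZ finJ J_def by (intro card_mono) auto
    also have "\<dots> \<le> card J" using finJ by (rule card_image_le)
    also have "card J \<le> card (set Q - A)"
    proof (rule card_inj_on_le)
      show "inj_on (\<lambda>j. Z ! (Suc j mod L)) J"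
      proof
        fix a b assume a: "a \<in> J" and b: "b \<in> J" and e: "Z ! (Suc a mod L) = Z ! (Suc b mod L)"
        have "Suc a mod L < L" "Suc b mod L < L" using L3 by auto
        then have "Suc a mod L = Suc b mod L" using e Zd Zlen by (simp add: nth_eq_iff_index_eq)
        moreover have "a < L" "b < L" using a b by (auto simp: J_def)
        ultimately show "a = b"
          by (cases "Suc a = L"; cases "Suc b = L") auto
      qed
      have "\<And>i. Z ! (Suc i mod L) \<in> set Q"
        using L3 Zlen Zset nth_mem[of "Suc _ mod L" Z] by auto
      then show "(\<lambda>j. Z ! (Suc j mod L)) ` J \<subseteq> set Q - A"
        by (auto simp: J_def)
    qed simp
    also have "\<dots> \<le> k - 1" by (rule nonA_card[OF Q])
    finally show False using degB[OF x(1) False] L3 by linarith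
  qed
qed

end


definition Dsum :: "('a \<Rightarrow> 'a \<Rightarrow> bool) \<Rightarrow> 'a set \<Rightarrow> nat" where
  "Dsum h V = (\<Sum>x\<in>V. gdeg h V x)"

lemma D_remove:
  assumes fin: "finite V" and v: "v \<in> V" and sym: "\<And>x y. h x y \<Longrightarrow> h y x" and irr: "\<And>x. \<not> h x x"
  shows "Dsum h V = Dsum h (V - {v}) + 2 * gdeg h V v"
proof -
  have "Dsum h V = gdeg h V v + (\<Sum>x\<in>V - {v}. gdeg h V x)"
    unfolding Dsum_def using fin v by (simp add: sum.remove)
  also have "(\<Sum>x\<in>V - {v}. gdeg h V x) = (\<Sum>x\<in>V - {v}. gdeg h (V - {v}) x + (if h x v then 1 else 0))"
  proof (rule sum.cong)
    fix x assume x: "x \<in> V - {v}"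
    show "gdeg h V x = gdeg h (V - {v}) x + (if h x v then 1 else 0)"
    proof (cases "h x v")
      case True
      then have "{y\<in>V. h x y} = insert v {y\<in>V - {v}. h x y}" using v by auto
      then show ?thesis using True fin by (simp add: gdeg_def)
    next
      case False
      then have "{y\<in>V. h x y} = {y\<in>V - {v}. h x y}" by auto
      then show ?thesis using False by (simp add: gdeg_def)
    qed
  qed simp
  also have "\<dots> = Dsum h (V - {v}) + (\<Sum>x\<in>V - {v}. (if h x v then 1 else 0))"
    by (simp add: sum.distrib Dsum_def)
  also have "(\<Sum>x\<in>V - {v}. (if h x v then 1 else 0)) = card {x\<in>V - {v}. h x v}"
    using fin by (simp add: sum.If_cases Int_def)
  also have "{x\<in>V - {v}. h x v} = {y\<in>V. h v y}" using sym irr by blast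
  finally show ?thesis by (simp add: gdeg_def)
qed

lemma D_split:
  assumes fin: "finite V" and W: "W \<subseteq> V" and cl: "\<And>x y. x \<in> W \<Longrightarrow> y \<in> V \<Longrightarrow> h x y \<Longrightarrow> y \<in> W"
    and sym: "\<And>x y. h x y \<Longrightarrow> h y x"
  shows "Dsum h V = Dsum h W + Dsum h (V - W)"
proof -
  have "Dsum h V = (\<Sum>x\<in>W. gdeg h V x) + (\<Sum>x\<in>V - W. gdeg h V x)"
    unfolding Dsum_def using fin W by (metis sum.subset_diff add.commute)
  also have "(\<Sum>x\<in>W. gdeg h V x) = Dsum h W"
    unfolding Dsum_def gdeg_def
    by (rule sum.cong) (use W cl in \<open>auto intro!: arg_cong[where f=card]\<close>)
  also have "(\<Sum>x\<in>V - W. gdeg h V x) = Dsum h (V - W)"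
    unfolding Dsum_def gdeg_def
    by (rule sum.cong) (use W cl sym in \<open>auto intro!: arg_cong[where f=card]\<close>)
  finally show ?thesis .
qed

lemma apath_mono: "apath h V' A ps \<Longrightarrow> V' \<subseteq> V \<Longrightarrow> apath h V A ps"
  by (auto simp: apath_def)

lemma EG:
  assumes "finite V" and sym: "\<And>x y. h x y \<Longrightarrow> h y x" and irr: "\<And>x. \<not> h x x"
    and AB: "\<And>x y. h x y \<Longrightarrow> x \<in> A \<or> y \<in> A"
    and np: "\<And>ps. apath h V A ps \<Longrightarrow> length ps < 2 * k" and k: "1 \<le> k"
  shows "Dsum h V \<le> 2 * (k - 1) * card (V \<inter> A) + 2 * k * card (V - A)"
  using assms(1) np
proof (induction "card V" arbitrary: V rule: less_induct)
  case less
  note fin = less.prems(1) and np = less.prems(2)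
  show ?case
  proof (cases "\<exists>v\<in>V. (v \<in> A \<and> gdeg h V v \<le> k - 1) \<or> (v \<notin> A \<and> gdeg h V v \<le> k)")
    case True
    then obtain v where v: "v \<in> V" "(v \<in> A \<and> gdeg h V v \<le> k - 1) \<or> (v \<notin> A \<and> gdeg h V v \<le> k)" by blast
    have IH: "Dsum h (V - {v}) \<le> 2 * (k - 1) * card ((V - {v}) \<inter> A) + 2 * k * card ((V - {v}) - A)"
    proof (rule less.hyps)
      have "card V > 0" using v fin card_gt_0_iff by blast
      then show "card (V - {v}) < card V" using v fin by simp
    qed (use fin np in \<open>auto intro: apath_mono\<close>)
    have D: "Dsum h V = Dsum h (V - {v}) + 2 * gdeg h V v" by (rule D_remove[OF fin v(1) sym irr])
    show ?thesis
    proof (cases "v \<in> A")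
      case True
      have "card (V \<inter> A) = Suc (card ((V - {v}) \<inter> A))"
      proof -
        have "(V - {v}) \<inter> A = (V \<inter> A) - {v}" by auto
        then show ?thesis using card_Suc_Diff1[of "V \<inter> A" v] fin v True by simp
      qed
      moreover have "(V - {v}) - A = V - A" using True by auto
      ultimately show ?thesis using IH D v True by (simp add: algebra_simps)
    next
      case False
      have "card (V - A) = Suc (card ((V - {v}) - A))"
      proof -
        have "(V - {v}) - A = (V - A) - {v}" by auto
        then show ?thesis using card_Suc_Diff1[of "V - A" v] fin v False by simp
      qed
      moreover have "(V - {v}) \<inter> A = V \<inter> A" using False by auto
      ultimately show ?thesis using IH D v False by (simp add: algebra_simps)
    qed
  next
    case False
    then have degA: "\<And>x. x \<in> V \<Longrightarrow> x \<in> A \<Longrightarrow> k \<le> gdeg h V x"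
      and degB: "\<And>x. x \<in> V \<Longrightarrow> x \<notin> A \<Longrightarrow> k + 1 \<le> gdeg h V x" by force+
    show ?thesis
    proof (cases "V \<inter> A = {}")
      case True
      have "gdeg h V x = 0" if "x \<in> V" for x
      proof -
        have "{y\<in>V. h x y} = {}" using True that AB by blast
        then show ?thesis unfolding gdeg_def by (simp only: card.empty)
      qed
      then have "Dsum h V = 0" by (simp add: Dsum_def)
      then show ?thesis by simp
    next
      case False
      then obtain a where a: "a \<in> V" "a \<in> A" by blast
      have "apath h V A [a]" using a by (simp add: apath_def)
      then have P1: "\<exists>ps. apath h V A ps \<and> length ps = 1" by force
      have bnd: "\<forall>y. (\<exists>ps. apath h V A ps \<and> length ps = y) \<longrightarrow> y < 2 * k"
        using np by auto
      obtain L where L: "\<exists>ps. apath h V A ps \<and> length ps = L"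
        and Lmax: "\<And>m. (\<exists>ps. apath h V A ps \<and> length ps = m) \<Longrightarrow> m \<le> L"
        using ex_has_greatest_nat[of "\<lambda>m. \<exists>ps. apath h V A ps \<and> length ps = m" 1 "\<lambda>m. m" "2 * k", OF P1 bnd]
        by blast
      obtain Q where Q: "apath h V A Q" "length Q = L" using L by blast
      have maxL: "\<And>ps. apath h V A ps \<Longrightarrow> length ps \<le> L" using Lmax by blast
      have Lk: "L < 2 * k" using np Q by blast
      define W where "W = set Q"
      have WV: "W \<subseteq> V" using Q by (simp add: W_def apath_def)
      have cl: "\<And>x y. x \<in> W \<Longrightarrow> y \<in> V \<Longrightarrow> h x y \<Longrightarrow> y \<in> W"
        using apath_closure[OF fin sym irr AB degA degB maxL Lk Q] unfolding W_def by blast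
      have Wne: "W \<noteq> {}" using Q by (auto simp: W_def apath_def)
      have cW: "card W = L" using Q by (simp add: W_def apath_def distinct_card)
      have finW: "finite W" by (simp add: W_def)
      have IH: "Dsum h (V - W) \<le> 2 * (k - 1) * card ((V - W) \<inter> A) + 2 * k * card ((V - W) - A)"
      proof (rule less.hyps)
        show "card (V - W) < card V" using WV Wne fin
          by (intro psubset_card_mono) auto
      qed (use fin np in \<open>auto intro: apath_mono\<close>)
      have DW: "Dsum h W \<le> 2 * (k - 1) * card (W \<inter> A) + 2 * k * card (W - A)"
      proof -
        have "Dsum h W = (\<Sum>x\<in>W \<inter> A. gdeg h W x) + (\<Sum>x\<in>W - A. gdeg h W x)"
          unfolding Dsum_def using finW by (metis sum.Int_Diff)
        also have "(\<Sum>x\<in>W \<inter> A. gdeg h W x) \<le> (\<Sum>x\<in>W \<inter> A. L - 1)"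
        proof (rule sum_mono)
          fix x assume x: "x \<in> W \<inter> A"
          have "{y\<in>W. h x y} \<subseteq> W - {x}" using irr by auto
          then have "gdeg h W x \<le> card (W - {x})" unfolding gdeg_def using finW by (intro card_mono) auto
          then show "gdeg h W x \<le> L - 1" using x cW finW by simp
        qed
        also have "(\<Sum>x\<in>W - A. gdeg h W x) \<le> (\<Sum>x\<in>W - A. card (W \<inter> A))"
        proof (rule sum_mono)
          fix x assume x: "x \<in> W - A"
          have "{y\<in>W. h x y} \<subseteq> W \<inter> A" using AB x by auto
          then show "gdeg h W x \<le> card (W \<inter> A)" unfolding gdeg_def using finW by (intro card_mono) auto
        qed
        finally have "Dsum h W \<le> card (W \<inter> A) * (L - 1) + card (W - A) * card (W \<inter> A)" by simp
        moreover have "card (W \<inter> A) * (L - 1) \<le> card (W \<inter> A) * (2 * (k - 1))"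
          using Lk by (intro mult_le_mono2) linarith
        moreover have "card (W \<inter> A) \<le> 2 * k" using card_mono[OF finW, of "W \<inter> A"] cW Lk by auto
        then have "card (W - A) * card (W \<inter> A) \<le> card (W - A) * (2 * k)" by (intro mult_le_mono2)
        ultimately have "Dsum h W \<le> card (W \<inter> A) * (2 * (k - 1)) + card (W - A) * (2 * k)"
          by linarith
        then show ?thesis by (simp only: mult.commute)
      qed
      have "Dsum h V = Dsum h W + Dsum h (V - W)" by (rule D_split[OF fin WV cl sym])
      moreover have "card (V \<inter> A) = card (W \<inter> A) + card ((V - W) \<inter> A)"
        using fin WV finite_subset[OF _ fin] by (subst card_Un_disjoint[symmetric]) (auto intro: arg_cong[where f=card])
      moreover have "card (V - A) = card (W - A) + card ((V - W) - A)"
        using fin WV finite_subset[OF _ fin] by (subst card_Un_disjoint[symmetric]) (auto intro: arg_cong[where f=card])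
      ultimately show ?thesis using IH DW by (simp add: algebra_simps)
    qed
  qed
qed




definition Qf :: "('a::finite \<Rightarrow> 'a \<Rightarrow> real) \<Rightarrow> ('a \<Rightarrow> real) \<Rightarrow> real" where
  "Qf a f = (\<Sum>i\<in>UNIV. \<Sum>j\<in>UNIV. a i j * f i * f j)"

definition Nf :: "('a::finite \<Rightarrow> real) \<Rightarrow> real" where
  "Nf f = (\<Sum>i\<in>UNIV. (f i)^2)"

lemma Nf_vec: "Nf (\<lambda>i. y $ i) = (norm y)^2"
  unfolding power2_norm_eq_inner by (simp add: Nf_def inner_vec_def power2_eq_square)

lemma Qf_scale: "Qf a (\<lambda>i. r * f i) = r^2 * Qf a f"
  by (simp add: Qf_def sum_distrib_left power2_eq_square algebra_simps)

lemma Nf_scale: "Nf (\<lambda>i. r * f i) = r^2 * Nf f"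
  by (simp add: Nf_def sum_distrib_left power2_eq_square algebra_simps)

lemma Nf_zero: "Nf f = 0 \<Longrightarrow> f i = 0"
proof -
  assume "Nf f = 0"
  then have "\<forall>i\<in>UNIV. (f i)^2 = 0" unfolding Nf_def by (subst sum_nonneg_eq_0_iff[symmetric]) auto
  then show ?thesis by simp
qed

lemma Qf_expand:
  assumes sym: "\<And>i j. a i j = a j i"
  shows "Qf a (\<lambda>i. f i + t * g i) = Qf a f + 2 * t * (\<Sum>i\<in>UNIV. \<Sum>j\<in>UNIV. a i j * f i * g j) + t^2 * Qf a g"
proof -
  have sw: "(\<Sum>i\<in>UNIV. \<Sum>j\<in>UNIV. a i j * g i * f j) = (\<Sum>i\<in>UNIV. \<Sum>j\<in>UNIV. a i j * f i * g j)"
    by (subst sum.swap) (simp add: sym mult.commute mult.left_commute)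
  have "Qf a (\<lambda>i. f i + t * g i) = (\<Sum>i\<in>UNIV. \<Sum>j\<in>UNIV. a i j * f i * f j + t * (a i j * f i * g j) + t * (a i j * g i * f j) + t^2 * (a i j * g i * g j))"
    unfolding Qf_def by (intro sum.cong refl) (simp add: algebra_simps power2_eq_square)
  also have "\<dots> = Qf a f + t * (\<Sum>i\<in>UNIV. \<Sum>j\<in>UNIV. a i j * f i * g j) + t * (\<Sum>i\<in>UNIV. \<Sum>j\<in>UNIV. a i j * g i * f j) + t^2 * Qf a g"
    unfolding Qf_def by (simp add: sum.distrib sum_distrib_left)
  finally show ?thesis using sw by (simp add: algebra_simps)
qed

lemma Nf_expand: "Nf (\<lambda>i. f i + t * g i) = Nf f + 2 * t * (\<Sum>i\<in>UNIV. f i * g i) + t^2 * Nf g"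
proof -
  have "Nf (\<lambda>i. f i + t * g i) = (\<Sum>i\<in>UNIV. (f i)^2 + 2 * t * (f i * g i) + t^2 * (g i)^2)"
    unfolding Nf_def by (intro sum.cong refl) (simp add: algebra_simps power2_eq_square)
  then show ?thesis by (simp add: Nf_def sum.distrib sum_distrib_left)
qed

lemma quad_zero:
  fixes c d :: real
  assumes "\<And>t. 2 * t * c + t^2 * d \<le> 0"
  shows "c = 0"
proof (rule ccontr)
  assume c: "c \<noteq> 0"
  define s where "s = 1 / (\<bar>d\<bar> + 1)"
  have s0: "s > 0" by (simp add: s_def)
  have s1: "s * \<bar>d\<bar> < 1" by (simp add: s_def field_simps)
  have "2 * (s * c) * c + (s * c)^2 * d \<le> 0" by (rule assms)
  moreover have "2 * (s * c) * c + (s * c)^2 * d \<ge> s * c^2 * (2 - s * \<bar>d\<bar>)"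
  proof -
    have "(s * c)^2 * d \<ge> - ((s * c)^2 * \<bar>d\<bar>)" 
    proof -
      have "- \<bar>d\<bar> \<le> d" by simp
      then have "(s * c)^2 * (- \<bar>d\<bar>) \<le> (s * c)^2 * d" by (rule mult_left_mono) simp
      then show ?thesis by simp
    qed
    then show ?thesis by (simp add: power2_eq_square algebra_simps)
  qed
  moreover have "s * c^2 * (2 - s * \<bar>d\<bar>) > 0" using s0 s1 c by simp
  ultimately show False by linarith
qed


lemma rayleigh:
  fixes a :: "'a::finite \<Rightarrow> 'a \<Rightarrow> real"
  assumes sym: "\<And>i j. a i j = a j i" and nn: "\<And>i j. a i j \<ge> 0"
  shows "\<exists>z \<rho>. (\<forall>i. z i \<ge> 0) \<and> Nf z = 1 \<and> (\<forall>j. (\<Sum>i\<in>UNIV. a j i * z i) = \<rho> * z j)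
           \<and> (\<forall>f. Qf a f \<le> \<rho> * Nf f)"
proof -
  define q where "q = (\<lambda>y::real^'a. Qf a (\<lambda>i. y $ i))"
  define S where "S = sphere (0::real^'a) 1"
  have cS: "compact S" unfolding S_def by (rule compact_sphere)
  have neS: "S \<noteq> {}" unfolding S_def by simp
  have ctq: "continuous_on S q" unfolding q_def Qf_def by (intro continuous_intros)
  obtain y0 where y0: "y0 \<in> S" and y0max: "\<And>y. y \<in> S \<Longrightarrow> q y \<le> q y0"
    using continuous_attains_sup[OF cS neS ctq] by blast
  define z where "z = (\<lambda>i. \<bar>y0 $ i\<bar>)"
  define z0 where "z0 = (\<chi> i. z i)"
  have "Nf (\<lambda>i. z0 $ i) = Nf (\<lambda>i. y0 $ i)" by (simp add: Nf_def z0_def z_def)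
  then have "(norm z0)^2 = (norm y0)^2" by (simp add: Nf_vec)
  then have "norm z0 = norm y0" by (simp add: power2_eq_iff_nonneg)
  then have z0S: "z0 \<in> S" using y0 by (simp add: S_def)
  have "q y0 \<le> q z0"
    unfolding q_def Qf_def z0_def z_def
  proof (intro sum_mono)
    fix i j
    have "y0 $ i * y0 $ j \<le> \<bar>y0 $ i\<bar> * \<bar>y0 $ j\<bar>" by (metis abs_ge_self abs_mult)
    then show "a i j * y0 $ i * y0 $ j \<le> a i j * (\<chi> i. \<bar>y0 $ i\<bar>) $ i * (\<chi> i. \<bar>y0 $ i\<bar>) $ j"
      using nn[of i j] by (simp add: mult.assoc mult_left_mono)
  qed
  define \<rho> where "\<rho> = Qf a z"
  have zz: "(\<lambda>i. z0 $ i) = z" by (rule ext) (simp add: z0_def)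
  have qz0: "q z0 = \<rho>" unfolding q_def \<rho>_def zz ..
  have Nz: "Nf z = 1"
  proof -
    have "Nf z = (norm z0)^2" using Nf_vec[of z0] zz by simp
    then show ?thesis using z0S by (simp add: S_def)
  qed
  have Q1: "Qf a f \<le> \<rho> * Nf f" for f
  proof (cases "Nf f = 0")
    case True
    then have "f i = 0" for i by (rule Nf_zero)
    then show ?thesis using True by (simp add: Qf_def)
  next
    case False
    have Np: "Nf f > 0" using False by (simp add: Nf_def less_le sum_nonneg)
    define r where "r = sqrt (Nf f)"
    have r0: "r > 0" using Np by (simp add: r_def)
    have r2: "r^2 = Nf f" using Np by (simp add: r_def)
    define y where "y = (\<chi> i. (1 / r) * f i)"
    have "Nf (\<lambda>i. y $ i) = 1" using Nf_scale[of "1/r" f] r2 r0 False by (simp add: y_def power_divide)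
    then have "y \<in> S" using Nf_vec[of y] using norm_ge_zero[of y] by (auto simp: S_def power2_eq_1_iff)
    then have "q y \<le> \<rho>" using y0max \<open>q y0 \<le> q z0\<close> qz0 by fastforce
    moreover have "(\<lambda>i. y $ i) = (\<lambda>i. (1/r) * f i)" by (rule ext) (simp add: y_def)
    then have "q y = (1/r)^2 * Qf a f" using Qf_scale[of a "1/r" f] unfolding q_def by simp
    ultimately have "Qf a f / r^2 \<le> \<rho>" by (simp add: power_divide)
    then show ?thesis using r2 r0 using Np by (simp add: pos_divide_le_eq mult.commute)
  qed
  have eig: "(\<Sum>i\<in>UNIV. a j i * z i) = \<rho> * z j" for j
  proof -
    define g where "g = (\<lambda>i::'a. if i = j then 1 else (0::real))"
    define B where "B = (\<Sum>i\<in>UNIV. \<Sum>j\<in>UNIV. a i j * z i * g j)"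
    define c where "c = B - \<rho> * (\<Sum>i\<in>UNIV. z i * g i)"
    define d where "d = Qf a g - \<rho> * Nf g"
    have "2 * t * c + t^2 * d \<le> 0" for t
    proof -
      have "Qf a (\<lambda>i. z i + t * g i) \<le> \<rho> * Nf (\<lambda>i. z i + t * g i)" by (rule Q1)
      then have "\<rho> + 2 * t * B + t^2 * Qf a g \<le> \<rho> * (1 + 2 * t * (\<Sum>i\<in>UNIV. z i * g i) + t^2 * Nf g)"
        unfolding Qf_expand[OF sym] Nf_expand B_def \<rho>_def[symmetric] using Nz by simp
      then show ?thesis unfolding c_def d_def by (simp add: algebra_simps)
    qed
    then have "c = 0" by (rule quad_zero)
    moreover have "B = (\<Sum>i\<in>UNIV. a i j * z i)" unfolding B_def g_def
      by (simp add: if_distrib cong: if_cong)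
    moreover have "(\<Sum>i\<in>UNIV. z i * g i) = z j" unfolding g_def by (simp add: if_distrib cong: if_cong)
    ultimately show ?thesis unfolding c_def using sym by (simp add: mult.commute)
  qed
  have "\<forall>i. z i \<ge> 0" by (simp add: z_def)
  then show ?thesis using Nz eig Q1 by blast
qed


definition am :: "('a \<Rightarrow> 'a \<Rightarrow> bool) \<Rightarrow> 'a \<Rightarrow> 'a \<Rightarrow> real" where
  "am E i j = (if E i j then 1 else 0)"

lemma adj_mult: "(adj_matrix E *v x) $ i = (\<Sum>j\<in>UNIV. am E i j * x $ j)"
  by (simp add: matrix_vector_mult_def adj_matrix_def am_def)

lemma am_sym: "simple_graph E \<Longrightarrow> am E i j = am E j i"
  by (auto simp: am_def simple_graph_def)

lemma eigen_comp:
  "adj_matrix E *v x = l *\<^sub>R x \<longleftrightarrow> (\<forall>i. (\<Sum>j\<in>UNIV. am E i j * x $ j) = l * x $ i)"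
  by (simp add: vec_eq_iff adj_mult)

lemma Nf_pos: "(x::real^'a::finite) \<noteq> 0 \<Longrightarrow> Nf (\<lambda>i. x $ i) > 0"
  by (simp add: Nf_vec)

lemma eig_le:
  assumes "\<And>f. Qf (am E) f \<le> \<rho> * Nf f" and "is_eigenvalue (adj_matrix E) l"
  shows "l \<le> \<rho>"
proof -
  obtain x where x: "x \<noteq> 0" "\<And>i. (\<Sum>j\<in>UNIV. am E i j * x $ j) = l * x $ i"
    using assms(2) unfolding is_eigenvalue_def eigen_comp by blast
  have "Qf (am E) (\<lambda>i. x $ i) = (\<Sum>i\<in>UNIV. x $ i * (\<Sum>j\<in>UNIV. am E i j * x $ j))"
    unfolding Qf_def by (simp add: sum_distrib_left algebra_simps)
  also have "\<dots> = l * Nf (\<lambda>i. x $ i)" unfolding x(2) Nf_def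
    by (simp add: sum_distrib_left power2_eq_square algebra_simps)
  finally have "l * Nf (\<lambda>i. x $ i) \<le> \<rho> * Nf (\<lambda>i. x $ i)" using assms(1) by metis
  then show ?thesis using Nf_pos[OF x(1)] by simp
qed

lemma eig_orth:
  assumes sg: "simple_graph E"
    and x: "adj_matrix E *v x = l *\<^sub>R x" and y: "adj_matrix E *v y = m *\<^sub>R y" and lm: "l \<noteq> m"
  shows "x \<bullet> y = 0"
proof -
  have x': "\<And>i. (\<Sum>j\<in>UNIV. am E i j * x $ j) = l * x $ i" using x unfolding eigen_comp by blast
  have y': "\<And>i. (\<Sum>j\<in>UNIV. am E i j * y $ j) = m * y $ i" using y unfolding eigen_comp by blast
  have "(\<Sum>i\<in>UNIV. y $ i * (\<Sum>j\<in>UNIV. am E i j * x $ j)) = (\<Sum>j\<in>UNIV. x $ j * (\<Sum>i\<in>UNIV. am E j i * y $ i))"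
  proof -
    have "(\<Sum>j\<in>UNIV. x $ j * (\<Sum>i\<in>UNIV. am E j i * y $ i)) = (\<Sum>j\<in>UNIV. \<Sum>i\<in>UNIV. y $ i * (am E i j * x $ j))"
      unfolding sum_distrib_left by (intro sum.cong refl) (use am_sym[OF sg] in \<open>simp add: mult.commute mult.left_commute\<close>)
    also have "\<dots> = (\<Sum>i\<in>UNIV. \<Sum>j\<in>UNIV. y $ i * (am E i j * x $ j))" by (rule sum.swap)
    finally show ?thesis by (simp add: sum_distrib_left)
  qed
  then have "l * (x \<bullet> y) = m * (x \<bullet> y)" unfolding x' y' inner_vec_def
    by (simp add: sum_distrib_left algebra_simps)
  then show ?thesis using lm by simp
qed

lemma eig_finite:
  assumes sg: "simple_graph E"
  shows "finite {l. is_eigenvalue (adj_matrix (E :: 'a::finite \<Rightarrow> 'a \<Rightarrow> bool)) l}"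
proof (rule ccontr)
  define S where "S = {l. is_eigenvalue (adj_matrix E) l}"
  assume "\<not> finite {l. is_eigenvalue (adj_matrix E) l}"
  then obtain T where T: "finite T" "card T = CARD('a) + 1" "T \<subseteq> S"
    using infinite_arbitrarily_large unfolding S_def by blast
  define ev where "ev = (\<lambda>l. SOME x::real^'a. x \<noteq> 0 \<and> adj_matrix E *v x = l *\<^sub>R x)"
  have ev: "ev l \<noteq> 0 \<and> adj_matrix E *v ev l = l *\<^sub>R ev l" if "l \<in> T" for l
  proof -
    have "\<exists>x::real^'a. x \<noteq> 0 \<and> adj_matrix E *v x = l *\<^sub>R x"
      using T(3) that unfolding S_def is_eigenvalue_def by auto
    then show ?thesis unfolding ev_def by (rule someI_ex)
  qed
  have inj: "inj_on ev T"
  proof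
    fix l m assume l: "l \<in> T" and m: "m \<in> T" and e: "ev l = ev m"
    have "l *\<^sub>R ev l = m *\<^sub>R ev l" using ev[OF l] ev[OF m] e by metis
    then show "l = m" using ev[OF l] by simp
  qed
  have "pairwise orthogonal (ev ` T)"
    unfolding pairwise_def orthogonal_def
  proof (clarify)
    fix l m assume l: "l \<in> T" and m: "m \<in> T" and ne: "ev l \<noteq> ev m"
    then have "l \<noteq> m" by auto
    then show "ev l \<bullet> ev m = 0" using eig_orth[OF sg] ev[OF l] ev[OF m] by blast
  qed
  moreover have "0 \<notin> ev ` T" using ev by auto
  ultimately have "independent (ev ` T)" by (rule pairwise_orthogonal_independent)
  then have "card (ev ` T) \<le> DIM(real^'a)" by (rule independent_bound[THEN conjunct2])
  then show False using card_image[OF inj] T(2) by simp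
qed


lemma card_am: "real (card {w. E j w}) = (\<Sum>i\<in>(UNIV::'a::finite set). am E j i)"
  by (simp add: am_def sum.If_cases Int_def)

lemma sum_am: "(\<Sum>v\<in>{v. E u v}. f v) = (\<Sum>j\<in>(UNIV::'a::finite set). am E u j * f j)"
proof -
  have "(\<Sum>v\<in>{v\<in>UNIV. E u v}. f v) = (\<Sum>j\<in>(UNIV::'a::finite set). if E u j then f j else 0)"
    by (rule sum.inter_filter) simp
  moreover have "\<And>j. (if E u j then f j else 0) = am E u j * f j" by (simp add: am_def)
  ultimately show ?thesis by simp
qed

lemma spec_bound:
  fixes E :: "'a::finite \<Rightarrow> 'a \<Rightarrow> bool" and \<alpha> \<beta> :: real
  assumes sg: "simple_graph E"
    and hyp: "\<And>u. (\<Sum>v\<in>{v. E u v}. real (card {w. E v w})) \<le> \<alpha> * real (card {v. E u v}) + \<beta>"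
  shows "(spectral_radius_graph E)^2 - \<alpha> * spectral_radius_graph E \<le> \<beta>"
proof -
  obtain z \<rho> where z0: "\<And>i. z i \<ge> 0" and Nz: "Nf z = 1"
    and eig: "\<And>j. (\<Sum>i\<in>UNIV. am E j i * z i) = \<rho> * z j" and Q1: "\<And>f. Qf (am E) f \<le> \<rho> * Nf f"
  proof -
    have nn: "\<And>i j. am E i j \<ge> 0" by (simp add: am_def)
    show ?thesis using rayleigh[of "am E", OF am_sym[OF sg] nn] that by blast
  qed
  define zv where "zv = (\<chi> i. z i)"
  have "adj_matrix E *v zv = \<rho> *\<^sub>R zv" unfolding eigen_comp zv_def using eig by simp
  moreover have "zv \<noteq> 0"
  proof
    assume "zv = 0"
    then have "z i = 0" for i by (simp add: zv_def vec_eq_iff)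
    then show False using Nz by (simp add: Nf_def)
  qed
  ultimately have rS: "is_eigenvalue (adj_matrix E) \<rho>" unfolding is_eigenvalue_def by blast
  define S where "S = {l. is_eigenvalue (adj_matrix E) l}"
  have fS: "finite S" unfolding S_def by (rule eig_finite[OF sg])
  have "Max S \<in> S" using fS rS by (intro Max_in) (auto simp: S_def)
  then have "Max S \<le> \<rho>" using eig_le[OF Q1] by (auto simp: S_def)
  moreover have "\<rho> \<le> Max S" using fS rS by (intro Max_ge) (auto simp: S_def)
  ultimately have sr: "spectral_radius_graph E = \<rho>" by (simp add: spectral_radius_graph_def S_def)
  define d where "d = (\<lambda>j. \<Sum>i\<in>(UNIV::'a set). am E j i)"
  define s where "s = (\<lambda>i. \<Sum>j\<in>(UNIV::'a set). am E i j * d j)"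
  have hyp': "s i \<le> \<alpha> * d i + \<beta>" for i
    using hyp[of i] unfolding s_def d_def card_am sum_am by simp
  have A1: "(\<Sum>i\<in>UNIV. \<rho> * z i) = (\<Sum>j\<in>UNIV. z j * d j)"
  proof -
    have "(\<Sum>i\<in>UNIV. \<rho> * z i) = (\<Sum>i\<in>UNIV. \<Sum>j\<in>UNIV. am E i j * z j)" using eig by simp
    also have "\<dots> = (\<Sum>j\<in>UNIV. \<Sum>i\<in>UNIV. am E i j * z j)" by (rule sum.swap)
    also have "\<dots> = (\<Sum>j\<in>UNIV. z j * d j)" unfolding d_def sum_distrib_left
      by (intro sum.cong refl) (use am_sym[OF sg] in \<open>simp add: mult.commute\<close>)
    finally show ?thesis .
  qed
  have A2: "(\<Sum>i\<in>UNIV. \<rho>^2 * z i) = (\<Sum>i\<in>UNIV. z i * s i)"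
  proof -
    have "(\<Sum>i\<in>UNIV. \<rho>^2 * z i) = \<rho> * (\<Sum>i\<in>UNIV. \<rho> * z i)"
      by (simp add: sum_distrib_left power2_eq_square mult.assoc)
    also have "\<dots> = (\<Sum>j\<in>UNIV. d j * (\<rho> * z j))" unfolding A1 sum_distrib_left
      by (simp add: algebra_simps)
    also have "\<dots> = (\<Sum>j\<in>UNIV. \<Sum>i\<in>UNIV. d j * (am E j i * z i))"
      by (simp only: eig[symmetric] sum_distrib_left)
    also have "\<dots> = (\<Sum>i\<in>UNIV. \<Sum>j\<in>UNIV. d j * (am E j i * z i))" by (rule sum.swap)
    also have "\<dots> = (\<Sum>i\<in>UNIV. z i * s i)" unfolding s_def sum_distrib_left
      by (intro sum.cong refl) (use am_sym[OF sg] in \<open>simp add: mult.commute mult.left_commute\<close>)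
    finally show ?thesis .
  qed
  have "(\<rho>^2 - \<alpha> * \<rho>) * (\<Sum>i\<in>UNIV. z i) = (\<Sum>i\<in>UNIV. z i * s i) - \<alpha> * (\<Sum>i\<in>UNIV. \<rho> * z i)"
    unfolding A2[symmetric] by (simp add: sum_distrib_left sum_distrib_right algebra_simps sum_subtractf)
  also have "\<dots> = (\<Sum>i\<in>UNIV. z i * (s i - \<alpha> * d i))" unfolding A1
    by (simp add: sum_distrib_left algebra_simps sum_subtractf)
  also have "\<dots> \<le> (\<Sum>i\<in>UNIV. z i * \<beta>)"
    by (intro sum_mono mult_left_mono) (use hyp' z0 in \<open>auto simp: algebra_simps\<close>)
  also have "\<dots> = \<beta> * (\<Sum>i\<in>UNIV. z i)" by (simp add: sum_distrib_left mult.commute)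
  finally have ineq: "(\<rho>^2 - \<alpha> * \<rho>) * (\<Sum>i\<in>UNIV. z i) \<le> \<beta> * (\<Sum>i\<in>UNIV. z i)" .
  have "(\<Sum>i\<in>UNIV. z i) > 0"
  proof (rule ccontr)
    assume "\<not> (\<Sum>i\<in>UNIV. z i) > 0"
    then have "(\<Sum>i\<in>UNIV. z i) = 0" using z0 by (meson leI order_antisym sum_nonneg)
    then have "z i = 0" for i using z0 sum_nonneg_eq_0_iff[of UNIV z] by simp
    then show False using Nz by (simp add: Nf_def)
  qed
  then have "\<rho>^2 - \<alpha> * \<rho> \<le> \<beta>" using ineq by simp
  then show ?thesis using sr by simp
qed



lemma cycle_from:
  assumes ne: "ts \<noteq> []" and w: "wpath E ts" and d: "distinct (u # ts)"
    and e1: "E u (hd ts)" and e2: "E (last ts) u"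
  shows "contains_cycle E (Suc (length ts))"
  unfolding contains_cycle_def
proof (intro exI conjI allI impI)
  show "length (u # ts) = Suc (length ts)" by simp
  show "distinct (u # ts)" by (rule d)
  fix i assume i: "i < Suc (length ts)"
  show "E ((u # ts) ! i) ((u # ts) ! ((i + 1) mod Suc (length ts)))"
  proof (cases "i = length ts")
    case True
    then show ?thesis using e2 ne by (simp add: last_conv_nth)
  next
    case False
    then have il: "i < length ts" using i by simp
    show ?thesis
    proof (cases i)
      case 0
      then show ?thesis using e1 ne il by (simp add: hd_conv_nth)
    next
      case (Suc i')
      then show ?thesis using wpath_nth[OF w, of i'] il by simp
    qed
  qed
qed

lemma double_count:
  assumes sym: "\<And>x y. E x y \<Longrightarrow> E y x" and fS: "finite S" and fT: "finite T"
  shows "(\<Sum>x\<in>S. card {y\<in>T. E x y}) = (\<Sum>y\<in>T. card {x\<in>S. E y x})"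
proof -
  have c: "card {y\<in>T. E x y} = (\<Sum>y\<in>T. if E x y then 1 else 0)" if "finite T" for x and T :: "'a set"
    using that by (simp add: sum.If_cases Int_def)
  have "(\<Sum>x\<in>S. card {y\<in>T. E x y}) = (\<Sum>x\<in>S. \<Sum>y\<in>T. if E x y then 1 else 0)"
    using fT c by simp
  also have "\<dots> = (\<Sum>y\<in>T. \<Sum>x\<in>S. if E x y then 1 else 0)" by (rule sum.swap)
  also have "\<dots> = (\<Sum>y\<in>T. \<Sum>x\<in>S. if E y x then 1 else 0)"
    by (intro sum.cong refl) (use sym in auto)
  also have "\<dots> = (\<Sum>y\<in>T. card {x\<in>S. E y x})" using fS c by simp
  finally show ?thesis .
qed

lemma arith_final:
  fixes a b X Y k :: nat
  assumes "1 \<le> k" "X \<le> 2 * (k - 1) * a" "X + 2 * Y \<le> 2 * (k - 1) * a + 2 * k * b"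
  shows "a + X + Y \<le> (k - 1) * a + k * (a + b)"
proof -
  obtain K where K: "k = Suc K" using assms(1) by (cases k) auto
  show ?thesis using assms(2,3) unfolding K by (simp add: algebra_simps)
qed

lemma vertex_bound:
  fixes E :: "'a::finite \<Rightarrow> 'a \<Rightarrow> bool"
  assumes sg: "simple_graph E" and k: "1 \<le> k"
    and nc1: "\<not> contains_cycle E (2*k+1)" and nc2: "\<not> contains_cycle E (2*k+2)"
  shows "(\<Sum>v\<in>{v. E u v}. card {w. E v w}) \<le> (k - 1) * card {v. E u v} + k * (CARD('a) - 1)"
proof -
  have sym: "\<And>x y. E x y \<Longrightarrow> E y x" and irr: "\<And>x. \<not> E x x" using sg by (auto simp: simple_graph_def)
  define N where "N = {v. E u v}"
  define V where "V = UNIV - {u}"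
  define R where "R = V - N"
  have uN: "u \<notin> N" using irr by (simp add: N_def)
  have NV: "N \<subseteq> V" using uN by (auto simp: V_def)
  define h1 where "h1 = (\<lambda>x y. E x y \<and> x \<in> N \<and> y \<in> N)"
  define h2 where "h2 = (\<lambda>x y. E x y \<and> (x \<in> N \<or> y \<in> N) \<and> x \<noteq> u \<and> y \<noteq> u)"
  have np1: "length ps < 2 * k" if ps: "apath h1 N N ps" for ps
  proof (rule ccontr)
    assume "\<not> length ps < 2 * k"
    then have len: "2 * k \<le> length ps" by simp
    define ts where "ts = take (2 * k) ps"
    have pne: "ps \<noteq> []" and pd: "distinct ps" and pN: "set ps \<subseteq> N" and pw: "wpath h1 ps" and ph: "hd ps \<in> N"
      using ps by (auto simp: apath_def)
    have tne: "ts \<noteq> []" using pne k by (simp add: ts_def)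
    have tw: "wpath E ts" unfolding ts_def by (rule wpath_take[OF wpath_mono[OF pw]]) (simp add: h1_def)
    have tN: "set ts \<subseteq> N" using pN by (auto simp: ts_def dest: in_set_takeD)
    have td: "distinct (u # ts)" using pd tN uN by (auto simp: ts_def)
    have "hd ts = hd ps" using pne k by (simp add: ts_def hd_take)
    then have e1: "E u (hd ts)" using ph by (simp add: N_def)
    have "last ts \<in> N" using tN tne by auto
    then have e2: "E (last ts) u" using sym by (simp add: N_def)
    have "length ts = 2 * k" using len by (simp add: ts_def)
    then show False using cycle_from[OF tne tw td e1 e2] nc1 by simp
  qed
  have EG1: "Dsum h1 N \<le> 2 * (k - 1) * card (N \<inter> N) + 2 * k * card (N - N)"
    by (rule EG) (use irr k in \<open>auto simp: h1_def N_def intro: sym np1\<close>)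
  have np2: "length ps < 2 * k" if ps: "apath h2 V N ps" for ps
  proof (rule ccontr)
    assume "\<not> length ps < 2 * k"
    then have len: "2 * k \<le> length ps" by simp
    have pne: "ps \<noteq> []" and pd: "distinct ps" and pV: "set ps \<subseteq> V" and pw: "wpath h2 ps"
      and ph: "hd ps \<in> N" and pl: "last ps \<in> N"
      using ps by (auto simp: apath_def)
    have pwE: "wpath E ps" by (rule wpath_mono[OF pw]) (simp add: h2_def)
    have uP: "u \<notin> set ps" using pV by (auto simp: V_def)
    have mk: "contains_cycle E (Suc m)" if m: "1 \<le> m" "m \<le> length ps" "ps ! (m - 1) \<in> N" for m
    proof -
      define ts where "ts = take m ps"
      have tne: "ts \<noteq> []" using pne m by (simp add: ts_def)
      have tw: "wpath E ts" unfolding ts_def by (rule wpath_take[OF pwE])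
      have td: "distinct (u # ts)" using pd uP by (auto simp: ts_def dest: in_set_takeD)
      have "hd ts = hd ps" using pne m by (simp add: ts_def hd_take)
      then have e1: "E u (hd ts)" using ph by (simp add: N_def)
      have "last ts = ps ! (m - 1)" using m tne by (simp add: ts_def last_conv_nth)
      then have e2: "E (last ts) u" using m sym by (simp add: N_def)
      have "length ts = m" using m by (simp add: ts_def)
      then show ?thesis using cycle_from[OF tne tw td e1 e2] by simp
    qed
    show False
    proof (cases "ps ! (2 * k - 1) \<in> N")
      case True
      then show False using mk[of "2 * k"] len k nc1 by simp
    next
      case False
      have "length ps \<noteq> 2 * k"
      proof
        assume "length ps = 2 * k"
        then have "last ps = ps ! (2 * k - 1)" using pne by (simp add: last_conv_nth)
        then show False using pl False by simp
      qed
      then have len2: "2 * k + 1 \<le> length ps" using len by simp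
      have "h2 (ps ! (2 * k - 1)) (ps ! Suc (2 * k - 1))" by (rule wpath_nth[OF pw]) (use len2 k in simp)
      then have "ps ! (2 * k) \<in> N" using False k by (simp add: h2_def)
      then show False using mk[of "2 * k + 1"] len2 k nc2 by simp
    qed
  qed
  have EG2: "Dsum h2 V \<le> 2 * (k - 1) * card (V \<inter> N) + 2 * k * card (V - N)"
    by (rule EG) (use irr k in \<open>auto simp: h2_def V_def intro: sym np2\<close>)
  define X where "X = (\<Sum>x\<in>N. card {y\<in>N. E x y})"
  define Y where "Y = (\<Sum>x\<in>N. card {y\<in>R. E x y})"
  have X1: "Dsum h1 N = X" unfolding Dsum_def X_def gdeg_def
    by (intro sum.cong refl) (auto simp: h1_def intro: arg_cong[where f=card])
  have "Dsum h2 V = (\<Sum>x\<in>N. gdeg h2 V x) + (\<Sum>x\<in>R. gdeg h2 V x)"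
    unfolding Dsum_def R_def using NV by (metis finite sum.subset_diff add.commute)
  also have "(\<Sum>x\<in>N. gdeg h2 V x) = (\<Sum>x\<in>N. card {y\<in>N. E x y} + card {y\<in>R. E x y})"
  proof (intro sum.cong refl)
    fix x assume x: "x \<in> N"
    have "{y\<in>V. h2 x y} = {y\<in>N. E x y} \<union> {y\<in>R. E x y}"
      using x uN by (auto simp: h2_def V_def R_def)
    moreover have "{y\<in>N. E x y} \<inter> {y\<in>R. E x y} = {}" by (auto simp: R_def)
    ultimately show "gdeg h2 V x = card {y\<in>N. E x y} + card {y\<in>R. E x y}"
      unfolding gdeg_def by (simp add: card_Un_disjoint)
  qed
  also have "(\<Sum>x\<in>R. gdeg h2 V x) = (\<Sum>x\<in>R. card {y\<in>N. E x y})"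
    unfolding gdeg_def by (intro sum.cong refl arg_cong[where f=card]) (use irr in \<open>auto simp: h2_def R_def V_def N_def\<close>)
  also have "\<dots> = Y" unfolding Y_def by (rule double_count[OF sym]) auto
  finally have X2: "Dsum h2 V = X + 2 * Y" unfolding X_def Y_def by (simp add: sum.distrib)
  have dN: "card {w. E x w} = 1 + card {y\<in>N. E x y} + card {y\<in>R. E x y}" if x: "x \<in> N" for x
  proof -
    have "{w. E x w} = insert u ({y\<in>N. E x y} \<union> {y\<in>R. E x y})"
    proof (intro set_eqI iffI)
      fix w assume w: "w \<in> {w. E x w}"
      show "w \<in> insert u ({y\<in>N. E x y} \<union> {y\<in>R. E x y})"
        using w by (cases "w = u") (auto simp: R_def V_def)
    next
      fix w assume w: "w \<in> insert u ({y\<in>N. E x y} \<union> {y\<in>R. E x y})"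
      have "E x u" using x sym by (simp add: N_def)
      then show "w \<in> {w. E x w}" using w by auto
    qed
    moreover have "{y\<in>N. E x y} \<inter> {y\<in>R. E x y} = {}" by (auto simp: R_def)
    ultimately show ?thesis using uN by (simp add: card_Un_disjoint R_def V_def)
  qed
  have "(\<Sum>v\<in>N. card {w. E v w}) = card N + X + Y"
  proof -
    have "(\<Sum>v\<in>N. card {w. E v w}) = (\<Sum>v\<in>N. 1 + card {y\<in>N. E v y} + card {y\<in>R. E v y})"
      using dN by (intro sum.cong) auto
    also have "\<dots> = card N + X + Y" unfolding X_def Y_def by (simp only: sum.distrib) simp
    finally show ?thesis .
  qed
  moreover have "card N + card R = CARD('a) - 1"
  proof -
    have "card V = CARD('a) - 1" by (simp add: V_def card_Diff_singleton)
    moreover have "card V = card N + card R" using NV unfolding R_def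
      by (metis card_Un_disjoint Diff_disjoint Un_Diff_cancel2 finite sup.absorb_iff2 Un_commute)
    ultimately show ?thesis by simp
  qed
  moreover have "X \<le> 2 * (k - 1) * card N" using EG1 X1 by simp
  moreover have "X + 2 * Y \<le> 2 * (k - 1) * card N + 2 * k * card R"
    using EG2 X2 NV by (simp add: R_def Int_absorb1)
  ultimately show ?thesis using arith_final[OF k] unfolding N_def[symmetric] by metis
qed

theorem theorem3:
  fixes E :: "'a::finite \<Rightarrow> 'a \<Rightarrow> bool" and k n :: nat
  assumes "simple_graph E"
    and "k \<ge> 1"
    and "n = CARD('a)"
    and "spectral_radius_graph E >
           (real k - 1) / 2 + sqrt (real k * real n + (real k + 1)^2 / 4)"
  shows "contains_cycle E (2*k+1) \<or> contains_cycle E (2*k+2)"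
proof (rule ccontr)
  assume "\<not> (contains_cycle E (2*k+1) \<or> contains_cycle E (2*k+2))"
  then have nc1: "\<not> contains_cycle E (2*k+1)" and nc2: "\<not> contains_cycle E (2*k+2)" by auto
  have n1: "1 \<le> n" using assms(3) by simp
  have vb: "(\<Sum>v\<in>{v. E u v}. real (card {w. E v w})) \<le> (real k - 1) * real (card {v. E u v}) + real k * (real n - 1)" for u
  proof -
    have "(\<Sum>v\<in>{v. E u v}. card {w. E v w}) \<le> (k - 1) * card {v. E u v} + k * (n - 1)"
      using vertex_bound[OF assms(1,2) nc1 nc2] assms(3) by simp
    then have "real (\<Sum>v\<in>{v. E u v}. card {w. E v w}) \<le> real ((k - 1) * card {v. E u v} + k * (n - 1))"
      by (simp only: of_nat_le_iff)
    then show ?thesis using assms(2) n1 by (simp add: of_nat_diff)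
  qed
  define \<mu> where "\<mu> = spectral_radius_graph E"
  have sb: "\<mu>^2 - (real k - 1) * \<mu> \<le> real k * (real n - 1)"
    unfolding \<mu>_def by (rule spec_bound[OF assms(1) vb])
  define X where "X = real k * real n + (real k + 1)^2 / 4"
  have X0: "X \<ge> 0" by (simp add: X_def)
  define t where "t = \<mu> - (real k - 1) / 2"
  have "t > sqrt X" using assms(4) by (simp add: t_def X_def \<mu>_def)
  moreover have "sqrt X \<ge> 0" using X0 by simp
  ultimately have "t^2 > (sqrt X)^2" by (intro power_strict_mono) auto
  then have "t^2 > X" using X0 by simp
  moreover have "t^2 = \<mu>^2 - (real k - 1) * \<mu> + (real k - 1)^2 / 4"
    unfolding t_def by (simp add: power2_eq_square algebra_simps)
  moreover have "(real k + 1)^2 / 4 - (real k - 1)^2 / 4 = real k"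
    by (simp add: power2_eq_square field_simps)
  ultimately have "\<mu>^2 - (real k - 1) * \<mu> > real k * real n + real k"
    unfolding X_def by linarith
  then show False using sb assms(2) by (simp add: algebra_simps)
qed

end
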